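(* For every state $x\in\mathcal X$ and every dataset $\mathbb D_N$, the GP-CBF-SOCP at $x$, $$\min_{u\in\mathbb R^m}\ \|u-u_{\text{ref}}(x)\|_2^2\quad\text{s.t.}\quad L_{\tilde f}B(x)+L_{\tilde g}B(x)u+\mu_B(x,u|\mathbb D_N)-\beta\,\sigma_B(x,u|\mathbb D_N)+\gamma(B(x))\ge 0,$$ is a convex optimization problem. Specifically, it is a second-order cone program: it has the same minimizer(s) $u$ as a problem with a linear objective subject to second-order cone constraints.
   Context: Consider the control-affine system $\dot x=f(x)+g(x)u$ with state $x\in\mathcal X\subset\mathbb R^n$ and input $u\in\mathbb R^m$. Here $f:\mathcal X\to\mathbb R^n$ and $g:\mathcal X\to\mathbb R^{n\times m}$ are locally Lipschitz and unknown. A nominal model $\tilde f:\mathcal X\to\mathbb R^n$, $\tilde g:\mathcal X\to\mathbb R^{n\times m}$ is available. Let $B:\mathcal X\to\mathbb R$ be continuously differentiable, let $\gamma$ be an extended class-$\mathcal K_\infty$ function, and let $u_{\text{ref}}:\mathcal X\to\mathbb R^m$ be a reference controller. Lie derivatives: $L_{\tilde f}B(x)=\nabla B(x)\tilde f(x)\in\mathbb R$ and $L_{\tilde g}B(x)=\nabla B(x)\tilde g(x)\in\mathbb R^{1\times m}$; $L_fB$ and $L_gB$ are defined in the same way. Set $\Delta_B(x,u)=(L_fB-L_{\tilde f}B)(x)+(L_gB-L_{\tilde g}B)(x)u$. A dataset $\mathbb D_N=\{((x_j,u_j),z_j)\}_{j=1}^N$ consists of noisy measurements $z_j=\Delta_B(x_j,u_j)+\epsilon_j$.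 GP model (affine dot product kernel): - Kernels $k_1,\dots,k_{m+1}:\mathcal X\times\mathcal X\to\mathbb R$ are given, and $k_c((x,y),(x',y'))=y^T\mathrm{diag}(k_1(x,x'),\dots,k_{m+1}(x,x'))y'$ for $y,y'\in\mathbb R^{m+1}$. - Let $y_j=[1,u_j^T]^T$, $\mathbf z=(z_1,\dots,z_N)^T$, let $\sigma_n>0$ be the noise parameter, and let $K_c\in\mathbb R^{N\times N}$ have entries $k_c((x_i,y_i),(x_j,y_j))$. - Let $K_{**}(x)=\mathrm{diag}(k_1(x,x),\dots,k_{m+1}(x,x))$, and let $K_{*Y}(x)\in\mathbb R^{(m+1)\times N}$ have $(i,j)$ entry $k_i(x,x_j)(y_j)_i$. - Define $m_B(x|\mathbb D_N)=K_{*Y}(K_c+\sigma_n^2I)^{-1}\mathbf z\in\mathbb R^{m+1}$ and $\Sigma_B(x|\mathbb D_N)=K_{**}-K_{*Y}(K_c+\sigma_n^2I)^{-1}K_{*Y}^T$. The matrix $\Sigma_B(x|\mathbb D_N)$ is positive definite. - The GP posterior mean and standard deviation of $\Delta_B$ are $\mu_B(x,u|\mathbb D_N)=m_B(x|\mathbb D_N)^T[1;u]$ and $\sigma_B(x,u|\mathbb D_N)=\sqrt{[1,u^T]\Sigma_B(x|\mathbb D_N)[1;u]}$. $\beta>0$ is a given constant. *)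

theory Defs
  imports "HOL-Analysis.Analysis"
begin

definition ext_class_K_inf :: "(real \<Rightarrow> real) \<Rightarrow> bool" where
  "ext_class_K_inf \<gamma> \<longleftrightarrow> continuous_on UNIV \<gamma> \<and> strict_mono \<gamma> \<and> \<gamma> 0 = 0 \<and>
     filterlim \<gamma> at_top at_top \<and> filterlim \<gamma> at_bot at_bot"

definition psd_kernel :: "('a \<Rightarrow> 'a \<Rightarrow> real) \<Rightarrow> bool" where
  "psd_kernel k \<longleftrightarrow> (\<forall>x y. k x y = k y x) \<and>
     (\<forall>xs c. length c = length xs \<longrightarrow>
        (\<Sum>i<length xs. \<Sum>j<length xs. c!i * c!j * k (xs!i) (xs!j)) \<ge> 0)"

text \<open>Index set of R^(m+1): the option type; None is the constant component 1,
  Some i is the i-th input component.\<close>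


definition Lie_f :: "(real^'n \<Rightarrow> real^'n) \<Rightarrow> (real^'n \<Rightarrow> real^'n) \<Rightarrow> real^'n \<Rightarrow> real" where
  "Lie_f gradB f x = gradB x \<bullet> f x"

definition Lie_g :: "(real^'n \<Rightarrow> real^'n) \<Rightarrow> (real^'n \<Rightarrow> real^'m^'n) \<Rightarrow> real^'n \<Rightarrow> real^'m" where
  "Lie_g gradB g x = transpose (g x) *v gradB x"

definition yvec :: "real^'m \<Rightarrow> real^('m option)" where
  "yvec u = (\<chi> i. case i of None \<Rightarrow> 1 | Some j \<Rightarrow> u $ j)"

definition Kc :: "('m::finite option \<Rightarrow> real^'n \<Rightarrow> real^'n \<Rightarrow> real) \<Rightarrow> ('d \<Rightarrow> real^'n) \<Rightarrow> ('d::finite \<Rightarrow> real^'m)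
    \<Rightarrow> real^'d^'d" where
  "Kc k xs us = (\<chi> i j. \<Sum>l\<in>UNIV. (yvec (us i)) $ l * k l (xs i) (xs j) * (yvec (us j)) $ l)"

definition Kss :: "('m::finite option \<Rightarrow> real^'n \<Rightarrow> real^'n \<Rightarrow> real) \<Rightarrow> real^'n \<Rightarrow> real^('m option)^('m option)" where
  "Kss k x = (\<chi> i j. if i = j then k i x x else 0)"

definition KsY :: "('m::finite option \<Rightarrow> real^'n \<Rightarrow> real^'n \<Rightarrow> real) \<Rightarrow> ('d \<Rightarrow> real^'n) \<Rightarrow> ('d::finite \<Rightarrow> real^'m)
    \<Rightarrow> real^'n \<Rightarrow> real^'d^('m option)" where
  "KsY k xs us x = (\<chi> i j. k i x (xs j) * (yvec (us j)) $ i)"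

definition Kreg_inv :: "('m::finite option \<Rightarrow> real^'n \<Rightarrow> real^'n \<Rightarrow> real) \<Rightarrow> ('d \<Rightarrow> real^'n) \<Rightarrow> ('d::finite \<Rightarrow> real^'m)
    \<Rightarrow> real \<Rightarrow> real^'d^'d" where
  "Kreg_inv k xs us \<sigma>n = matrix_inv (Kc k xs us + (\<sigma>n ^ 2) *\<^sub>R mat 1)"

definition mB :: "('m option \<Rightarrow> real^'n \<Rightarrow> real^'n \<Rightarrow> real) \<Rightarrow> ('d::finite \<Rightarrow> real^'n) \<Rightarrow> ('d::finite \<Rightarrow> real^'m)
    \<Rightarrow> real^'d \<Rightarrow> real \<Rightarrow> real^'n \<Rightarrow> real^('m option)" where
  "mB k xs us z \<sigma>n x = KsY k xs us x *v (Kreg_inv k xs us \<sigma>n *v z)"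

definition SigmaB :: "('m option \<Rightarrow> real^'n \<Rightarrow> real^'n \<Rightarrow> real) \<Rightarrow> ('d::finite \<Rightarrow> real^'n) \<Rightarrow> ('d::finite \<Rightarrow> real^'m)
    \<Rightarrow> real \<Rightarrow> real^'n \<Rightarrow> real^('m option)^('m option)" where
  "SigmaB k xs us \<sigma>n x = Kss k x - KsY k xs us x ** Kreg_inv k xs us \<sigma>n ** transpose (KsY k xs us x)"

definition muB :: "('m option \<Rightarrow> real^'n \<Rightarrow> real^'n \<Rightarrow> real) \<Rightarrow> ('d::finite \<Rightarrow> real^'n) \<Rightarrow> ('d::finite \<Rightarrow> real^'m)
    \<Rightarrow> real^'d \<Rightarrow> real \<Rightarrow> real^'n \<Rightarrow> real^'m \<Rightarrow> real" where
  "muB k xs us z \<sigma>n x u = mB k xs us z \<sigma>n x \<bullet> yvec u"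

definition sigB :: "('m option \<Rightarrow> real^'n \<Rightarrow> real^'n \<Rightarrow> real) \<Rightarrow> ('d::finite \<Rightarrow> real^'n) \<Rightarrow> ('d::finite \<Rightarrow> real^'m)
    \<Rightarrow> real \<Rightarrow> real^'n \<Rightarrow> real^'m \<Rightarrow> real" where
  "sigB k xs us \<sigma>n x u = sqrt (yvec u \<bullet> (SigmaB k xs us \<sigma>n x *v yvec u))"

definition is_minimizer :: "('a \<Rightarrow> bool) \<Rightarrow> ('a \<Rightarrow> real) \<Rightarrow> 'a \<Rightarrow> bool" where
  "is_minimizer F J u \<longleftrightarrow> F u \<and> (\<forall>v. F v \<longrightarrow> J u \<le> J v)"

definition convex_problem :: "('a::real_vector \<Rightarrow> real) \<Rightarrow> ('a \<Rightarrow> real) \<Rightarrow> bool" where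
  "convex_problem J h \<longleftrightarrow> convex_on UNIV J \<and> convex_on UNIV (\<lambda>u. - h u)"

text \<open>Second-order cone programs in the variable (u,s), u :: real^'m, s a real vector
  of length p (auxiliary variables, given as a list).\<close>

type_synonym 'm aff = "(real^'m) \<times> real list \<times> real"

definition aff_eval :: "'m::finite aff \<Rightarrow> real^'m \<Rightarrow> real list \<Rightarrow> real" where
  "aff_eval A u s = fst A \<bullet> u + (\<Sum>i<length s. fst (snd A) ! i * s ! i) + snd (snd A)"

definition soc_feasible :: "('m::finite aff list \<times> 'm aff) list \<Rightarrow> real^'m \<Rightarrow> real list \<Rightarrow> bool" where
  "soc_feasible cons u s \<longleftrightarrow>
     (\<forall>(As, d) \<in> set cons. sqrt (\<Sum>l\<leftarrow>As. (aff_eval l u s)\<^sup>2) \<le> aff_eval d u s)"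

definition lin_obj :: "(real^'m::finite) \<times> real list \<Rightarrow> real^'m \<Rightarrow> real list \<Rightarrow> real" where
  "lin_obj c u s = fst c \<bullet> u + (\<Sum>i<length s. snd c ! i * s ! i)"

definition socp_minimizer ::
  "nat \<Rightarrow> (real^'m::finite) \<times> real list \<Rightarrow> ('m aff list \<times> 'm aff) list \<Rightarrow> real^'m \<Rightarrow> real list \<Rightarrow> bool" where
  "socp_minimizer p c cons u s \<longleftrightarrow>
     is_minimizer (\<lambda>(u', s'). length s' = p \<and> soc_feasible cons u' s')
                  (\<lambda>(u', s'). lin_obj c u' s') (u, s)"

end

theory Submission
  imports Defs
begin


definition qf :: "('a \<Rightarrow> 'a \<Rightarrow> real) \<Rightarrow> 'a set \<Rightarrow> ('a \<Rightarrow> real) \<Rightarrow> real" where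
  "qf S I y = (\<Sum>i\<in>I. \<Sum>j\<in>I. S i j * y i * y j)"

lemma qf_cong: "(\<And>i. i \<in> I \<Longrightarrow> y i = y' i) \<Longrightarrow> qf S I y = qf S I y'"
  unfolding qf_def by (intro sum.cong refl) auto

lemma qf_insert:
  assumes "finite I" "a \<notin> I" "\<forall>i\<in>insert a I. \<forall>j\<in>insert a I. S i j = S j i"
  shows "qf S (insert a I) y = S a a * (y a)\<^sup>2 + 2 * y a * (\<Sum>j\<in>I. S a j * y j) + qf S I y"
proof -
  have sym: "(\<Sum>i\<in>I. S i a * y i * y a) = y a * (\<Sum>j\<in>I. S a j * y j)"
  proof -
    have sy: "S i a = S a i" if "i \<in> I" for i using assms(3) that by blast
    have "(\<Sum>i\<in>I. S i a * y i * y a) = (\<Sum>i\<in>I. y a * (S a i * y i))"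
      by (rule sum.cong[OF refl]) (simp only: sy mult_ac)
    then show ?thesis by (simp only: sum_distrib_left)
  qed
  have "qf S (insert a I) y = S a a * y a * y a + (\<Sum>j\<in>I. S a j * y a * y j)
      + (\<Sum>i\<in>I. S i a * y i * y a + (\<Sum>j\<in>I. S i j * y i * y j))"
    unfolding qf_def using assms(1,2) by (simp add: sum.insert)
  also have "\<dots> = S a a * (y a)\<^sup>2 + 2 * y a * (\<Sum>j\<in>I. S a j * y j) + qf S I y"
    unfolding qf_def sum.distrib sym by (simp add: sum_distrib_left power2_eq_square mult_ac)
  finally show ?thesis .
qed

lemma chol_aux:
  fixes S :: "'a \<Rightarrow> 'a \<Rightarrow> real"
  assumes "finite I"
  shows "(\<forall>i\<in>I. \<forall>j\<in>I. S i j = S j i) \<Longrightarrow> (\<forall>y. (\<exists>i\<in>I. y i \<noteq> 0) \<longrightarrow> qf S I y > 0)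
    \<Longrightarrow> \<exists>C. \<forall>y. qf S I y = (\<Sum>k\<in>I. (\<Sum>i\<in>I. C k i * y i)\<^sup>2)"
  using assms
proof (induction I arbitrary: S rule: finite_induct)
  case empty
  then show ?case by (simp add: qf_def)
next
  case (insert a I)
  define s where "s = S a a"
  have ne: "i \<noteq> a" if "i \<in> I" for i using that insert.hyps by blast
  define e :: "'a \<Rightarrow> real" where "e i = (if i = a then 1 else 0)" for i
  have "qf S (insert a I) e > 0"
    using insert.prems(2)[rule_format, of e] unfolding e_def by simp
  moreover have "qf S (insert a I) e = s"
  proof -
    have ea: "e a = 1" unfolding e_def by simp
    have ez: "e i = 0" if "i \<in> I" for i unfolding e_def using ne[OF that] by simp
    have "qf S (insert a I) e = S a a * e a * e a + (\<Sum>j\<in>I. S a j * e a * e j)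
        + (\<Sum>i\<in>I. S i a * e i * e a + (\<Sum>j\<in>I. S i j * e i * e j))"
      unfolding qf_def using insert.hyps by (simp add: sum.insert)
    also have "\<dots> = S a a"
    proof -
      have "(\<Sum>i\<in>I. S i a * e i * e a + (\<Sum>j\<in>I. S i j * e i * e j)) = 0"
        by (rule sum.neutral) (simp add: ez)
      moreover have "(\<Sum>j\<in>I. S a j * e a * e j) = 0" by (rule sum.neutral) (simp add: ez)
      ultimately show ?thesis by (simp add: ea)
    qed
    finally show ?thesis unfolding s_def .
  qed
  ultimately have s_pos: "s > 0" by simp
  define S' where "S' i j = S i j - S i a * S a j / s" for i j
  define w where "w y = (\<Sum>j\<in>I. S a j * y j) / s" for y
  have key: "qf S (insert a I) y = s * (y a + w y)\<^sup>2 + qf S' I y" for y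
  proof -
    have sy: "(\<Sum>i\<in>I. S i a * y i) = (\<Sum>j\<in>I. S a j * y j)"
    proof (rule sum.cong[OF refl])
      fix i assume "i \<in> I"
      then have "S i a = S a i" using insert.prems(1) by blast
      then show "S i a * y i = S a i * y i" by (simp only:)
    qed
    have "qf S' I y = qf S I y - (\<Sum>i\<in>I. S i a * y i) * (\<Sum>j\<in>I. S a j * y j) / s"
    proof -
      have "qf S' I y = (\<Sum>i\<in>I. \<Sum>j\<in>I. S i j * y i * y j - (S i a * y i) * (S a j * y j) / s)"
        unfolding qf_def S'_def by (intro sum.cong refl) (simp add: left_diff_distrib)
      also have "\<dots> = qf S I y - (\<Sum>i\<in>I. \<Sum>j\<in>I. (S i a * y i) * (S a j * y j)) / s"
        unfolding qf_def by (simp add: sum_subtractf sum_divide_distrib)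
      also have "(\<Sum>i\<in>I. \<Sum>j\<in>I. (S i a * y i) * (S a j * y j)) = (\<Sum>i\<in>I. S i a * y i) * (\<Sum>j\<in>I. S a j * y j)"
        by (simp add: sum_product)
      finally show ?thesis .
    qed
    then show ?thesis
    proof -
      have alg: "s * ya\<^sup>2 + 2 * ya * T + Q = s * (ya + T / s)\<^sup>2 + (Q - T * T / s)" for ya T Q :: real
      proof -
        have sT: "s * (T / s) = T" using s_pos by simp
        have "s * (ya + T / s)\<^sup>2 = s * ya\<^sup>2 + 2 * ya * (s * (T / s)) + (s * (T / s)) * (T / s)"
          by (simp add: power2_eq_square algebra_simps)
        also have "\<dots> = s * ya\<^sup>2 + 2 * ya * T + T * T / s" unfolding sT by simp
        finally show ?thesis by simp
      qed
      show ?thesis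
        unfolding qf_insert[OF insert.hyps insert.prems(1)] w_def \<open>qf S' I y = _\<close> sy s_def[symmetric]
        by (rule alg)
    qed
  qed
  have symS': "\<forall>i\<in>I. \<forall>j\<in>I. S' i j = S' j i"
  proof (intro ballI)
    fix i j assume ij: "i \<in> I" "j \<in> I"
    have "S i j = S j i" "S i a = S a i" "S a j = S j a" using insert.prems(1) ij by blast+
    then show "S' i j = S' j i" unfolding S'_def by (simp only: mult.commute)
  qed
  have pdS': "\<forall>y. (\<exists>i\<in>I. y i \<noteq> 0) \<longrightarrow> qf S' I y > 0"
  proof (intro allI impI)
    fix y :: "'a \<Rightarrow> real" assume nz: "\<exists>i\<in>I. y i \<noteq> 0"
    define y' where "y' = y(a := - w y)"
    have "w y' = w y" unfolding w_def y'_def using insert.hyps by (intro arg_cong[where f="\<lambda>t. t / s"] sum.cong) auto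
    moreover have "qf S' I y' = qf S' I y" unfolding y'_def using insert.hyps by (intro qf_cong) auto
    ultimately have "qf S (insert a I) y' = qf S' I y" using key[of y'] by (simp add: y'_def)
    moreover have "qf S (insert a I) y' > 0"
      using insert.prems(2) nz insert.hyps unfolding y'_def by (metis fun_upd_other insertCI)
    ultimately show "qf S' I y > 0" by simp
  qed
  obtain C' where C': "\<forall>y. qf S' I y = (\<Sum>k\<in>I. (\<Sum>i\<in>I. C' k i * y i)\<^sup>2)"
    using insert.IH[OF symS' pdS'] by blast
  define C where "C k i = (if k = a then (if i = a then sqrt s else sqrt s * S a i / s)
     else (if i = a then 0 else C' k i))" for k i
  show ?case
  proof (intro exI allI)
    fix y
    have e1: "(\<Sum>i\<in>insert a I. C a i * y i) = sqrt s * (y a + w y)"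
    proof -
      have "(\<Sum>i\<in>insert a I. C a i * y i) = sqrt s * y a + (\<Sum>i\<in>I. sqrt s * S a i / s * y i)"
        using insert.hyps unfolding C_def by (simp add: sum.insert) (intro sum.cong, auto)
      also have "(\<Sum>i\<in>I. sqrt s * S a i / s * y i) = sqrt s * ((\<Sum>j\<in>I. S a j * y j) / s)"
        by (simp add: sum_distrib_left sum_divide_distrib mult_ac)
      finally show ?thesis unfolding w_def by (simp add: distrib_left)
    qed
    have e2: "(\<Sum>i\<in>insert a I. C k i * y i) = (\<Sum>i\<in>I. C' k i * y i)" if "k \<in> I" for k
    proof -
      have "k \<noteq> a" using that insert.hyps by auto
      then show ?thesis unfolding C_def using insert.hyps
        by (simp add: sum.insert) (intro sum.cong, auto)
    qed
    have "(\<Sum>k\<in>insert a I. (\<Sum>i\<in>insert a I. C k i * y i)\<^sup>2)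
        = (sqrt s * (y a + w y))\<^sup>2 + (\<Sum>k\<in>I. (\<Sum>i\<in>I. C' k i * y i)\<^sup>2)"
      using insert.hyps e1 e2 by (simp add: sum.insert)
    also have "\<dots> = qf S (insert a I) y" using key C' s_pos by (simp add: power_mult_distrib)
    finally show "qf S (insert a I) y = (\<Sum>k\<in>insert a I. (\<Sum>i\<in>insert a I. C k i * y i)\<^sup>2)" by simp
  qed
qed


lemma chol_vec:
  fixes M :: "real^'k^'k"
  assumes pd: "\<And>v. v \<noteq> 0 \<Longrightarrow> v \<bullet> (M *v v) > 0"
  shows "\<exists>C::'k\<Rightarrow>'k\<Rightarrow>real. \<forall>v. v \<bullet> (M *v v) = (\<Sum>k\<in>UNIV. (\<Sum>i\<in>UNIV. C k i * v$i)\<^sup>2)"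
proof -
  define S where "S i j = (M$i$j + M$j$i) / 2" for i j
  have eq: "v \<bullet> (M *v v) = qf S UNIV (\<lambda>i. v$i)" for v
  proof -
    have "v \<bullet> (M *v v) = (\<Sum>i\<in>UNIV. \<Sum>j\<in>UNIV. M$i$j * v$i * v$j)"
      unfolding inner_vec_def matrix_vector_mult_def by (simp add: sum_distrib_left mult_ac)
    moreover have "(\<Sum>i\<in>UNIV. \<Sum>j\<in>UNIV. M$j$i * v$i * v$j) = (\<Sum>i\<in>UNIV. \<Sum>j\<in>UNIV. M$i$j * v$i * v$j)"
      by (subst sum.swap) (simp add: mult_ac)
    moreover have "(\<Sum>i\<in>UNIV. \<Sum>j\<in>UNIV. (M$i$j + M$j$i) / 2 * v$i * v$j)
       = (\<Sum>i\<in>UNIV. \<Sum>j\<in>UNIV. M$i$j * v$i * v$j) / 2 + (\<Sum>i\<in>UNIV. \<Sum>j\<in>UNIV. M$j$i * v$i * v$j) / 2"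
      by (simp add: sum_divide_distrib sum.distrib[symmetric] algebra_simps add_divide_distrib)
    ultimately show ?thesis unfolding qf_def S_def by simp
  qed
  have sym: "\<forall>i\<in>UNIV. \<forall>j\<in>UNIV. S i j = S j i" unfolding S_def by auto
  have pdS: "\<forall>y. (\<exists>i\<in>UNIV. y i \<noteq> 0) \<longrightarrow> qf S UNIV y > 0"
  proof (intro allI impI)
    fix y :: "'k \<Rightarrow> real" assume "\<exists>i\<in>UNIV. y i \<noteq> 0"
    then have "(\<chi> i. y i) \<noteq> 0" by (metis vec_lambda_beta zero_index)
    then have "qf S UNIV (\<lambda>i. (\<chi> i. y i)$i) > 0" using pd eq by metis
    then show "qf S UNIV y > 0" by simp
  qed
  obtain C :: "'k \<Rightarrow> 'k \<Rightarrow> real" where "\<forall>y. qf S UNIV y = (\<Sum>k\<in>UNIV. (\<Sum>i\<in>UNIV. C k i * y i)\<^sup>2)"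
    using chol_aux[OF finite_class.finite_UNIV sym pdS] by blast
  then show ?thesis using eq by metis
qed

lemma sum_option_UNIV:
  fixes f :: "'a::finite option \<Rightarrow> 'b::comm_monoid_add"
  shows "sum f UNIV = f None + (\<Sum>j\<in>UNIV. f (Some j))"
  unfolding UNIV_option_conv by (simp add: sum.reindex)

lemma yvec_comb: "yvec ((1 - t) *\<^sub>R a + t *\<^sub>R b) = (1 - t) *\<^sub>R yvec a + t *\<^sub>R yvec b"
  unfolding yvec_def by (auto simp: vec_eq_iff algebra_simps split: option.splits)


theorem theorem1:
  fixes X :: "(real^'n) set"
    and ft :: "real^'n \<Rightarrow> real^'n" and gt :: "real^'n \<Rightarrow> real^'m^'n"
    and B :: "real^'n \<Rightarrow> real" and gradB :: "real^'n \<Rightarrow> real^'n"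
    and \<gamma> :: "real \<Rightarrow> real" and uref :: "real^'n \<Rightarrow> real^'m"
    and k :: "'m option \<Rightarrow> real^'n \<Rightarrow> real^'n \<Rightarrow> real"
    and xs :: "'d::finite \<Rightarrow> real^'n" and us :: "'d \<Rightarrow> real^'m" and z :: "real^'d"
    and \<sigma>n \<beta> :: real and x :: "real^'n"
  assumes B_C1: "\<And>x'. x' \<in> X \<Longrightarrow> (B has_derivative (\<lambda>h. gradB x' \<bullet> h)) (at x' within X)"
    and gradB_cont: "continuous_on X gradB"
    and gamma: "ext_class_K_inf \<gamma>"
    and kernels: "\<And>i. psd_kernel (k i)"
    and data: "\<And>j. xs j \<in> X"
    and sigma_n: "\<sigma>n > 0"
    and beta: "\<beta> > 0"
    and x_in: "x \<in> X"
    and Sigma_pd: "\<And>v. v \<noteq> 0 \<Longrightarrow> v \<bullet> (SigmaB k xs us \<sigma>n x *v v) > 0"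
  defines "J \<equiv> (\<lambda>u. (norm (u - uref x))\<^sup>2)"
    and "h \<equiv> (\<lambda>u. Lie_f gradB ft x + Lie_g gradB gt x \<bullet> u + muB k xs us z \<sigma>n x u
                    - \<beta> * sigB k xs us \<sigma>n x u + \<gamma> (B x))"
  shows "convex_problem J h \<and>
         (\<exists>p c cons.
            (\<forall>u. h u \<ge> 0 \<longleftrightarrow> (\<exists>s. length s = p \<and> soc_feasible cons u s)) \<and>
            (\<forall>u. is_minimizer (\<lambda>u. h u \<ge> 0) J u \<longleftrightarrow>
                  (\<exists>s. socp_minimizer p c cons u s)))"
  proof -
  let ?Sig = "SigmaB k xs us \<sigma>n x"
  obtain C :: "'m option \<Rightarrow> 'm option \<Rightarrow> real" where
    C: "\<And>v. v \<bullet> (?Sig *v v) = (\<Sum>q\<in>UNIV. (\<Sum>i\<in>UNIV. C q i * v$i)\<^sup>2)"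
    using chol_vec[OF Sigma_pd] by blast
  define l where "l q u = C q None + (\<Sum>j\<in>UNIV. C q (Some j) * u$j)" for q u
  have yl: "(\<Sum>i\<in>UNIV. C q i * yvec u $ i) = l q u" for q u
    unfolding l_def yvec_def by (simp add: sum_option_UNIV)
  have sig: "sigB k xs us \<sigma>n x u = L2_set (\<lambda>q. l q u) UNIV" for u
    unfolding sigB_def L2_set_def C yl ..
  define mv where "mv = mB k xs us z \<sigma>n x"
  define a0 where "a0 = Lie_f gradB ft x + mv $ None + \<gamma> (B x)"
  define bv where "bv = Lie_g gradB gt x + (\<chi> j. mv $ Some j)"
  have hf: "h u = a0 + bv \<bullet> u - \<beta> * L2_set (\<lambda>q. l q u) UNIV" for u
  proof -
    have "muB k xs us z \<sigma>n x u = mv $ None + (\<chi> j. mv $ Some j) \<bullet> u"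
      unfolding muB_def mv_def[symmetric] by (simp add: inner_vec_def yvec_def sum_option_UNIV)
    then show ?thesis unfolding h_def sig a0_def bv_def inner_add_left by simp
  qed
  have lcomb: "l q ((1 - t) *\<^sub>R a + t *\<^sub>R b) = (1 - t) * l q a + t * l q b" for q t a b
    unfolding l_def by (simp add: algebra_simps sum.distrib sum_distrib_left sum_subtractf)
  have cJ: "convex_on UNIV J"
  proof (rule convex_onI)
    fix t :: real and a b :: "real^'m" assume t: "0 < t" "t < 1"
    define P where "P = norm (a - uref x)"
    define Q where "Q = norm (b - uref x)"
    have e: "(1 - t) *\<^sub>R a + t *\<^sub>R b - uref x = (1 - t) *\<^sub>R (a - uref x) + t *\<^sub>R (b - uref x)"
      by (simp add: algebra_simps)
    have "norm ((1 - t) *\<^sub>R a + t *\<^sub>R b - uref x) \<le> norm ((1 - t) *\<^sub>R (a - uref x)) + norm (t *\<^sub>R (b - uref x))"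
      unfolding e by (rule norm_triangle_ineq)
    also have "\<dots> = (1 - t) * P + t * Q" using t by (simp add: P_def Q_def)
    finally have n: "norm ((1 - t) *\<^sub>R a + t *\<^sub>R b - uref x) \<le> (1 - t) * P + t * Q" .
    have "(norm ((1 - t) *\<^sub>R a + t *\<^sub>R b - uref x))\<^sup>2 \<le> ((1 - t) * P + t * Q)\<^sup>2"
      by (rule power_mono[OF n]) simp
    also have "\<dots> \<le> (1 - t) * P\<^sup>2 + t * Q\<^sup>2"
    proof -
      have "(1 - t) * P\<^sup>2 + t * Q\<^sup>2 - ((1 - t) * P + t * Q)\<^sup>2 = t * (1 - t) * (P - Q)\<^sup>2"
        by (simp add: power2_eq_square algebra_simps)
      moreover have "t * (1 - t) * (P - Q)\<^sup>2 \<ge> 0" using t by simp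
      ultimately show ?thesis by linarith
    qed
    finally show "J ((1 - t) *\<^sub>R a + t *\<^sub>R b) \<le> (1 - t) * J a + t * J b"
      unfolding J_def P_def Q_def .
  qed simp
  have cH: "convex_on UNIV (\<lambda>u. - h u)"
  proof (rule convex_onI)
    fix t :: real and a b :: "real^'m" assume t: "0 < t" "t < 1"
    have L: "L2_set (\<lambda>q. l q ((1 - t) *\<^sub>R a + t *\<^sub>R b)) UNIV
        \<le> (1 - t) * L2_set (\<lambda>q. l q a) UNIV + t * L2_set (\<lambda>q. l q b) UNIV"
      unfolding lcomb
      using L2_set_triangle_ineq[of "\<lambda>q. (1 - t) * l q a" "\<lambda>q. t * l q b" UNIV]
        L2_set_right_distrib[of "1 - t" "\<lambda>q. l q a" UNIV] L2_set_right_distrib[of t "\<lambda>q. l q b" UNIV] t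
      by simp
    have "\<beta> * L2_set (\<lambda>q. l q ((1 - t) *\<^sub>R a + t *\<^sub>R b)) UNIV
        \<le> \<beta> * ((1 - t) * L2_set (\<lambda>q. l q a) UNIV + t * L2_set (\<lambda>q. l q b) UNIV)"
      using L beta by (simp add: mult_left_mono)
    moreover have "a0 + bv \<bullet> ((1 - t) *\<^sub>R a + t *\<^sub>R b) = (1 - t) * (a0 + bv \<bullet> a) + t * (a0 + bv \<bullet> b)"
      by (simp add: inner_add_right algebra_simps)
    ultimately show "- h ((1 - t) *\<^sub>R a + t *\<^sub>R b) \<le> (1 - t) * - h a + t * - h b"
      unfolding hf by (simp add: algebra_simps)
  qed simp
  obtain ks :: "'m option list" where ks: "distinct ks" "set ks = UNIV"
    using finite_distinct_list[OF finite_class.finite_UNIV] by metis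
  obtain js :: "'m list" where js: "distinct js" "set js = UNIV"
    using finite_distinct_list[OF finite_class.finite_UNIV] by metis
  define F where "F q = ((\<chi> j. \<beta> * C q (Some j)) :: real^'m, [0::real], \<beta> * C q None)" for q
  define D where "D = (bv, [0::real], a0)"
  define G where "G j = ((axis j (1::real)) :: real^'m, [0::real], - (uref x $ j))" for j
  define E where "E = ((0::real^'m), [1::real], 0::real)"
  define cons where "cons = [(map F ks, D), (map G js, E)]"
  define c where "c = ((0::real^'m), [1::real])"
  have s1: "(\<Sum>i<length s. ll ! i * s ! i) = ll ! 0 * s ! 0" if "length s = 1" for s ll :: "real list"
    using that by simp
  have aF: "aff_eval (F q) u s = \<beta> * l q u" if "length s = 1" for q u s
    unfolding aff_eval_def s1[OF that] F_def l_def by (simp add: inner_vec_def sum_distrib_left algebra_simps)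
  have aD: "aff_eval D u s = a0 + bv \<bullet> u" if "length s = 1" for u s
    unfolding aff_eval_def s1[OF that] D_def by simp
  have aG: "aff_eval (G j) u s = u$j - uref x $ j" if "length s = 1" for j u s
    unfolding aff_eval_def s1[OF that] G_def by (simp add: cart_eq_inner_axis inner_commute)
  have aE: "aff_eval E u s = s ! 0" if "length s = 1" for u s
    unfolding aff_eval_def s1[OF that] E_def by simp
  have sF: "sqrt (\<Sum>ll\<leftarrow>map F ks. (aff_eval ll u s)\<^sup>2) = \<beta> * L2_set (\<lambda>q. l q u) UNIV"
    if "length s = 1" for u s
  proof -
    have "(\<Sum>ll\<leftarrow>map F ks. (aff_eval ll u s)\<^sup>2) = (\<Sum>q\<leftarrow>ks. (\<beta> * l q u)\<^sup>2)"
      using aF[OF that] by (simp add: comp_def)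
    also have "\<dots> = (\<Sum>q\<in>UNIV. (\<beta> * l q u)\<^sup>2)"
      using sum.distinct_set_conv_list[OF ks(1), of "\<lambda>q. (\<beta> * l q u)\<^sup>2"] ks(2) by simp
    finally show ?thesis
      using L2_set_right_distrib[of \<beta> "\<lambda>q. l q u" UNIV] beta unfolding L2_set_def by simp
  qed
  have sG: "sqrt (\<Sum>ll\<leftarrow>map G js. (aff_eval ll u s)\<^sup>2) = norm (u - uref x)"
    if "length s = 1" for u s
  proof -
    have "(\<Sum>ll\<leftarrow>map G js. (aff_eval ll u s)\<^sup>2) = (\<Sum>j\<leftarrow>js. (u$j - uref x $ j)\<^sup>2)"
      using aG[OF that] by (simp add: comp_def)
    also have "\<dots> = (\<Sum>j\<in>UNIV. (u$j - uref x $ j)\<^sup>2)"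
      using sum.distinct_set_conv_list[OF js(1), of "\<lambda>j. (u$j - uref x $ j)\<^sup>2"] js(2) by simp
    finally show ?thesis unfolding norm_vec_def L2_set_def by simp
  qed
  have feas: "soc_feasible cons u s \<longleftrightarrow> (h u \<ge> 0 \<and> norm (u - uref x) \<le> s ! 0)"
    if "length s = 1" for u s
    unfolding soc_feasible_def cons_def using sF[OF that] sG[OF that] aD[OF that] aE[OF that] hf[of u]
    by auto
  have lo: "lin_obj c u s = s ! 0" if "length s = 1" for u s
    unfolding lin_obj_def c_def using that by simp
  have P1: "\<forall>u. h u \<ge> 0 \<longleftrightarrow> (\<exists>s. length s = 1 \<and> soc_feasible cons u s)"
  proof (intro allI iffI)
    fix u assume "h u \<ge> 0"
    then show "\<exists>s. length s = 1 \<and> soc_feasible cons u s"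
      using feas[of "[norm (u - uref x)]"] by (intro exI[of _ "[norm (u - uref x)]"]) simp
  next
    fix u assume "\<exists>s. length s = 1 \<and> soc_feasible cons u s"
    then show "h u \<ge> 0" using feas by blast
  qed
  have P2: "\<forall>u. is_minimizer (\<lambda>u. h u \<ge> 0) J u \<longleftrightarrow> (\<exists>s. socp_minimizer 1 c cons u s)"
  proof (intro allI iffI)
    fix u assume "is_minimizer (\<lambda>u. h u \<ge> 0) J u"
    then have hu: "0 \<le> h u" and mn: "\<And>v. 0 \<le> h v \<Longrightarrow> J u \<le> J v" unfolding is_minimizer_def by auto
    have "socp_minimizer 1 c cons u [norm (u - uref x)]"
      unfolding socp_minimizer_def is_minimizer_def
    proof (intro conjI allI impI)
      show "case (u, [norm (u - uref x)]) of (u', s') \<Rightarrow> length s' = 1 \<and> soc_feasible cons u' s'"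
        using feas[of "[norm (u - uref x)]"] hu by simp
      fix p :: "(real^'m) \<times> real list"
      assume pa: "case p of (u', s') \<Rightarrow> length s' = 1 \<and> soc_feasible cons u' s'"
      obtain v s' where p: "p = (v, s')" by (cases p)
      have ls': "length s' = 1" and fv: "soc_feasible cons v s'" using pa p by auto
      have hv: "0 \<le> h v" and nv: "norm (v - uref x) \<le> s' ! 0" using feas[OF ls'] fv by auto
      have "J u \<le> J v" using mn[OF hv] .
      then have "norm (u - uref x) \<le> norm (v - uref x)"
        unfolding J_def by (rule power2_le_imp_le) simp
      then show "(case (u, [norm (u - uref x)]) of (u', s') \<Rightarrow> lin_obj c u' s') \<le> (case p of (u', s') \<Rightarrow> lin_obj c u' s')"
        using p lo[OF ls'] lo[of "[norm (u - uref x)]"] nv by simp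
    qed
    then show "\<exists>s. socp_minimizer 1 c cons u s" by blast
  next
    fix u assume "\<exists>s. socp_minimizer 1 c cons u s"
    then obtain s where sm: "socp_minimizer 1 c cons u s" by blast
    have ls: "length s = 1" and fu: "soc_feasible cons u s"
      using sm unfolding socp_minimizer_def is_minimizer_def by auto
    have all: "lin_obj c u s \<le> lin_obj c v s'" if "length s' = 1" "soc_feasible cons v s'" for v s'
      using sm that unfolding socp_minimizer_def is_minimizer_def by fastforce
    have hu: "0 \<le> h u" and nu: "norm (u - uref x) \<le> s ! 0" using feas[OF ls] fu by auto
    show "is_minimizer (\<lambda>u. h u \<ge> 0) J u"
      unfolding is_minimizer_def
    proof (intro conjI allI impI)
      show "0 \<le> h u" by (rule hu)
      fix v assume hv: "0 \<le> h v"
      have "soc_feasible cons v [norm (v - uref x)]" using feas[of "[norm (v - uref x)]"] hv by simp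
      then have "s ! 0 \<le> norm (v - uref x)"
        using all[of "[norm (v - uref x)]" v] lo[OF ls] lo[of "[norm (v - uref x)]"] by simp
      then have "norm (u - uref x) \<le> norm (v - uref x)" using nu by linarith
      then show "J u \<le> J v" unfolding J_def by (rule power_mono) simp
    qed
  qed
  have cvx: "convex_problem J h" unfolding convex_problem_def using cJ cH by simp
  show ?thesis using cvx P1 P2 by blast
qed

end
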